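(* Let $m \geq 2$ be an integer and $n = m^2$. For $k = 0,1,\ldots,m-1$ let $u_k = e^{i 2 k \pi/m}$. For $\mathbf{t} = (t_0,t_1,\ldots,t_{m-2}) \in (\mathbb{C}\setminus\{0\})^{m-1}$ define the point $\mathbf{x}(\mathbf{t}) = (x_0,\ldots,x_{n-1}) \in \mathbb{C}^n$ by \[ x_{km+j} = u_k\, t_0 t_1 \cdots t_j \quad (j = 0,1,\ldots,m-2), \qquad x_{km+m-1} = u_k\, t_0^{-m+1} t_1^{-m+2} \cdots t_{m-3}^{-2} t_{m-2}^{-1}, \] for $k = 0,1,\ldots,m-1$ (so the exponent of $t_j$ in $x_{km+m-1}$ is $-(m-1-j)$). Then every point $\mathbf{x}(\mathbf{t})$, $\mathbf{t} \in (\mathbb{C}\setminus\{0\})^{m-1}$, is a cyclic $n$-root, and the set $\{\mathbf{x}(\mathbf{t}) : \mathbf{t} \in (\mathbb{C}\setminus\{0\})^{m-1}\}$ is an $(m-1)$-dimensional set of cyclic $n$-roots.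
   Context: For a positive integer $n$, the cyclic $n$-roots system in the variables $x_0,\ldots,x_{n-1}$ consists of the $n$ equations \[ \sum_{j=0}^{n-1} \prod_{k=j}^{j+i-1} x_{k \bmod n} = 0 \quad (i = 1,2,\ldots,n-1), \qquad x_0 x_1 \cdots x_{n-1} - 1 = 0. \] (For $i=1$ this is $x_0+\cdots+x_{n-1}=0$, for $i=2$ it is $x_0x_1+x_1x_2+\cdots+x_{n-2}x_{n-1}+x_{n-1}x_0=0$.) A cyclic $n$-root is a point of $\mathbb{C}^n$ satisfying all these equations. *)

theory Defs
  imports "HOL-Analysis.Analysis"
begin

text \<open>The cyclic n-roots system; points of C^n are functions nat => complex,
  only the coordinates 0..n-1 are relevant.\<close>
definition cyclic_root :: "nat \<Rightarrow> (nat \<Rightarrow> complex) \<Rightarrow> bool" where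
  "cyclic_root n x \<longleftrightarrow>
     (\<forall>i\<in>{1..n-1}. (\<Sum>j<n. \<Prod>k\<in>{j..<j+i}. x (k mod n)) = 0) \<and>
     (\<Prod>k<n. x k) - 1 = 0"

definition unit_root :: "nat \<Rightarrow> nat \<Rightarrow> complex" where
  "unit_root m k = exp (\<i> * 2 * of_nat k * of_real pi / of_nat m)"

definition xpt :: "nat \<Rightarrow> (nat \<Rightarrow> complex) \<Rightarrow> nat \<Rightarrow> complex" where
  "xpt m t p =
     (let k = p div m; j = p mod m in
      unit_root m k *
      (if j < m - 1 then (\<Prod>l\<le>j. t l)
       else (\<Prod>l<m-1. t l powi (- int (m - 1 - l)))))"

text \<open>Parameter domain (C\<setminus>{0})^(m-1): t_j nonzero for j < m-1, other entries fixed to 0.\<close>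
definition param_dom :: "nat \<Rightarrow> (nat \<Rightarrow> complex) set" where
  "param_dom m = {t. (\<forall>j<m-1. t j \<noteq> 0) \<and> (\<forall>j\<ge>m-1. t j = 0)}"

end

theory Submission
  imports Defs
begin

definition yv :: "nat \<Rightarrow> (nat \<Rightarrow> complex) \<Rightarrow> nat \<Rightarrow> complex" where
  "yv m t j = (if j < m-1 then (\<Prod>l\<le>j. t l) else (\<Prod>l<m-1. t l powi (- int (m - 1 - l))))"

lemma xpt_eq: "xpt m t p = unit_root m (p div m) * yv m t (p mod m)"
  by (simp add: xpt_def yv_def Let_def)

lemma unit_root_pow: "unit_root m k = unit_root m 1 ^ k"
proof -
  have "unit_root m k = exp (of_nat k * (\<i> * 2 * of_real pi / of_nat m))"
    unfolding unit_root_def by (simp add: mult_ac)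
  also have "\<dots> = unit_root m 1 ^ k" unfolding exp_of_nat_mult unit_root_def by simp
  finally show ?thesis .
qed

lemma unit_root_1_pow_eq_1:
  assumes "m > 0" shows "unit_root m 1 ^ r = 1 \<longleftrightarrow> m dvd r"
proof -
  have e: "unit_root m 1 ^ r = exp (\<i> * (2 * of_real (real r * pi / real m)))"
  proof -
    have "unit_root m 1 ^ r = unit_root m r" by (simp only: unit_root_pow[of m r])
    thus ?thesis unfolding unit_root_def by (simp add: mult_ac)
  qed
  have "unit_root m 1 ^ r = 1 \<longleftrightarrow> (\<exists>n::int. 2 * (real r * pi / real m) = of_int (2*n) * pi)"
    unfolding e exp_eq_1 by simp
  also have "\<dots> \<longleftrightarrow> (\<exists>n::int. real r = of_int n * real m)"
    using assms by (auto simp: field_simps)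
  also have "\<dots> \<longleftrightarrow> m dvd r"
  proof
    assume "\<exists>n::int. real r = of_int n * real m"
    then obtain n::int where "real r = of_int n * real m" by blast
    hence "int r = n * int m" by (metis of_int_eq_iff of_int_mult of_int_of_nat_eq)
    hence "int m dvd int r" by simp
    thus "m dvd r" by simp
  next
    assume "m dvd r" then obtain k where "r = m * k" by blast
    thus "\<exists>n::int. real r = of_int n * real m" by (intro exI[of _ "int k"]) simp
  qed
  finally show ?thesis .
qed

lemma prod_tri: "(\<Prod>j<M. \<Prod>l\<le>j. (t l :: complex)) = (\<Prod>l<M. t l ^ (M - l))"
proof (induction M)
  case 0 then show ?case by simp
next
  case (Suc M)
  have "(\<Prod>l<Suc M. t l ^ (Suc M - l)) = (\<Prod>l<M. t l ^ (M - l) * t l) * t M"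
    by (simp add: Suc_diff_le mult.commute)
  also have "\<dots> = (\<Prod>l<M. t l ^ (M - l)) * (\<Prod>l\<le>M. t l)"
    by (simp add: prod.distrib lessThan_Suc_atMost[symmetric])
  finally show ?case using Suc by simp
qed

lemma pw_inv: "(z::complex) \<noteq> 0 \<Longrightarrow> z ^ a * z powi (- int a) = 1"
  by (simp add: power_int_minus power_int_of_nat)

lemma yv_prod:
  assumes "m \<ge> 2" "\<forall>j<m-1. t j \<noteq> 0"
  shows "(\<Prod>b<m. yv m t b) = 1"
proof -
  have m: "m = Suc (m-1)" using assms by simp
  have "(\<Prod>b<m. yv m t b) = (\<Prod>b<m-1. yv m t b) * yv m t (m-1)"
    by (subst m) (simp only: prod.lessThan_Suc)
  also have "(\<Prod>b<m-1. yv m t b) = (\<Prod>l<m-1. t l ^ (m - 1 - l))"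
    by (simp add: yv_def prod_tri)
  also have "yv m t (m-1) = (\<Prod>l<m-1. t l powi (- int (m - 1 - l)))" by (simp add: yv_def)
  also have "(\<Prod>l<m-1. t l ^ (m - 1 - l)) * \<dots> = (\<Prod>l<m-1. t l ^ (m - 1 - l) * t l powi (- int (m - 1 - l)))"
    by (simp add: prod.distrib)
  also have "\<dots> = 1"
    using assms(2) by (intro prod.neutral ballI pw_inv) auto
  finally show ?thesis .
qed

lemma yv_nz: assumes "\<forall>j<m-1. t j \<noteq> 0" shows "yv m t b \<noteq> 0"
  using assms by (auto simp: yv_def)

lemma omega_m: "m > 0 \<Longrightarrow> unit_root m 1 ^ m = 1"
  by (metis dvd_refl unit_root_1_pow_eq_1)

lemma omega_mod: assumes "m > 0" shows "unit_root m 1 ^ (k mod m) = unit_root m 1 ^ k"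
proof -
  have "unit_root m 1 ^ k = unit_root m 1 ^ (m * (k div m) + k mod m)" by simp
  also have "\<dots> = (unit_root m 1 ^ m) ^ (k div m) * unit_root m 1 ^ (k mod m)"
    by (simp only: power_add power_mult)
  finally show ?thesis using omega_m[OF assms] by simp
qed

lemma g_eq: assumes "m > 0" "n = m^2"
  shows "xpt m t (q mod n) = unit_root m 1 ^ (q div m) * yv m t (q mod m)"
proof -
  have a: "q mod n mod m = q mod m" using assms by (simp add: power2_eq_square mod_mod_cancel)
  have b: "q mod n div m = q div m mod m"
  proof -
    have "q mod n = m * (q div m mod m) + q mod m" unfolding assms(2) power2_eq_square by (rule mod_mult2_eq)
    thus ?thesis using assms(1) by simp
  qed
  show ?thesis unfolding xpt_eq a b
    by (simp only: unit_root_pow[of m "q div m mod m"] omega_mod[OF assms(1)])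
qed

lemma sum_shift1:
  fixes h :: "nat \<Rightarrow> complex"
  assumes "h n = h 0" shows "(\<Sum>p<n. h (Suc p)) = (\<Sum>p<n. h p)"
proof -
  have "h 0 + (\<Sum>p<n. h (Suc p)) = (\<Sum>p<Suc n. h p)" by (simp only: sum.lessThan_Suc_shift)
  also have "\<dots> = (\<Sum>p<n. h p) + h 0" using assms by simp
  finally show ?thesis by simp
qed

lemma sum_shift:
  fixes f :: "nat \<Rightarrow> complex"
  assumes "\<And>p. f (p + n) = f p" shows "(\<Sum>p<n. f (p + a)) = (\<Sum>p<n. f p)"
proof (induction a)
  case 0 then show ?case by simp
next
  case (Suc a)
  have "(\<Sum>p<n. f (p + Suc a)) = (\<Sum>p<n. (\<lambda>q. f (q + a)) (Suc p))" by simp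
  also have "\<dots> = (\<Sum>p<n. f (p + a))"
    by (rule sum_shift1) (use assms[of a] in \<open>simp add: add.commute\<close>)
  finally show ?case using Suc by simp
qed


lemma sum_zero_shift:
  fixes f :: "nat \<Rightarrow> complex"
  assumes per: "\<And>p. f (p + n) = f p" and sh: "\<And>p. f (p + a) = c * f p" and c: "c \<noteq> 1"
  shows "(\<Sum>p<n. f p) = 0"
proof -
  have "(\<Sum>p<n. f p) = (\<Sum>p<n. f (p + a))" using sum_shift[of f n a, OF per] by simp
  also have "\<dots> = c * (\<Sum>p<n. f p)" by (simp add: sh sum_distrib_left)
  finally have "(1 - c) * (\<Sum>p<n. f p) = 0" by (simp add: algebra_simps)
  thus ?thesis using c by simp
qed

lemma cyclic_part:
  assumes m2: "m \<ge> 2" and nn: "n = m ^ 2" and t: "t \<in> param_dom m"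
  shows "cyclic_root n (xpt m t)"
proof -
  have m0: "m > 0" using m2 by simp
  define w where "w = unit_root m 1"
  define g where "g q = xpt m t (q mod n)" for q
  have tnz: "\<forall>j<m-1. t j \<noteq> 0" using t by (simp add: param_dom_def)
  have geq: "g q = w ^ (q div m) * yv m t (q mod m)" for q
    unfolding g_def w_def by (rule g_eq[OF m0 nn])
  have wnz: "w \<noteq> 0" using omega_m[OF m0] unfolding w_def by (metis power_0_left m0 zero_neq_one gr_implies_not0)
  have gnz: "g q \<noteq> 0" for q using geq wnz yv_nz[OF tnz] by simp
  have gm: "g (q + m) = w * g q" for q
  proof -
    have "(q + m) div m = Suc (q div m)" "(q + m) mod m = q mod m" using m0 by simp_all
    thus ?thesis unfolding geq by simp
  qed
  have gms: "g (q + m * s) = w ^ s * g q" for q s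
  proof -
    have "(q + m * s) div m = q div m + s" "(q + m * s) mod m = q mod m" using m0 by simp_all
    thus ?thesis unfolding geq by (simp add: power_add)
  qed
  have gn: "g (q + n) = g q" for q unfolding g_def by simp
  have sums: "(\<Sum>j<n. \<Prod>k\<in>{j..<j+i}. xpt m t (k mod n)) = 0" if i: "i \<in> {1..n-1}" for i
  proof -
    define f where "f p = (\<Prod>k\<in>{p..<p+i}. g k)" for p
    have fsh: "f (p + a) = (\<Prod>k\<in>{p..<p+i}. g (k + a))" for p a
      unfolding f_def using prod.shift_bounds_nat_ivl[of g p a "p+i"] by (simp add: add_ac)
    have per: "f (p + n) = f p" for p using fsh[of p n] by (simp add: gn f_def)
    have "(\<Sum>p<n. f p) = 0"
    proof (cases "m dvd i")
      case False
      show ?thesis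
      proof (rule sum_zero_shift[of f n, OF per])
        show "f (p + m) = w ^ i * f p" for p
          using fsh[of p m] by (simp add: gm f_def prod.distrib)
        show "w ^ i \<noteq> 1" using False unit_root_1_pow_eq_1[OF m0] w_def by simp
      qed
    next
      case True
      then obtain s where s: "i = m * s" by blast
      have "s < m"
      proof (rule ccontr)
        assume "\<not> s < m" hence a1: "m * m \<le> m * s" by simp
        have a2: "0 < m * m" using m0 by simp
        have a3: "m * s \<le> m * m - 1" using i s nn by (simp add: power2_eq_square)
        show False using a1 a2 a3 by linarith
      qed
      moreover have "s > 0" using i s by (cases s) auto
      ultimately have nd: "\<not> m dvd s" by (meson nat_dvd_not_less)
      show ?thesis
      proof (rule sum_zero_shift[of f n, OF per])
        show "f (p + 1) = w ^ s * f p" for p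
        proof -
          have "f (p + 1) * g p = (\<Prod>k\<in>{p..<Suc (p+i)}. g k)"
            unfolding f_def using i by (simp add: prod.atLeast_Suc_lessThan mult.commute)
          also have "\<dots> = f p * g (p + i)" unfolding f_def by (simp add: prod.atLeastLessThan_Suc)
          also have "\<dots> = (w ^ s * f p) * g p" unfolding s gms by simp
          finally show ?thesis using gnz[of p] by simp
        qed
        show "w ^ s \<noteq> 1" using nd unit_root_1_pow_eq_1[OF m0] w_def by simp
      qed
    qed
    thus ?thesis unfolding f_def g_def .
  qed
  have prod1: "(\<Prod>k<n. xpt m t k) - 1 = 0"
  proof -
    have "(\<Prod>k<n. xpt m t k) = (\<Prod>k<m * m. g k)"
      unfolding g_def nn power2_eq_square by (intro prod.cong) auto
    also have "\<dots> = (\<Prod>a<m. \<Prod>k\<in>{a * m..<a * m + m}. g k)"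
      by (rule prod.nat_group[symmetric])
    also have "\<dots> = (\<Prod>a<m. 1)"
    proof (intro prod.cong refl)
      fix a assume "a \<in> {..<m}"
      have "(\<Prod>k\<in>{a * m..<a * m + m}. g k) = (\<Prod>b\<in>{0..<m}. g (b + a * m))"
        using prod.shift_bounds_nat_ivl[of g 0 "a*m" m] by (simp add: add_ac)
      also have "\<dots> = (\<Prod>b<m. w ^ a * yv m t b)"
      proof (intro prod.cong)
        fix b assume "b \<in> {..<m}"
        hence "(b + a * m) div m = a" "(b + a * m) mod m = b" by auto
        thus "g (b + a * m) = w ^ a * yv m t b" unfolding geq by simp
      qed (auto simp: atLeast0LessThan)
      also have "\<dots> = (w ^ m) ^ a * (\<Prod>b<m. yv m t b)"
        by (simp add: prod.distrib power_mult[symmetric] mult.commute)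
      also have "\<dots> = 1" using yv_prod[OF m2 tnz] omega_m[OF m0] w_def by simp
      finally show "(\<Prod>k\<in>{a * m..<a * m + m}. g k) = 1" .
    qed
    finally show ?thesis by simp
  qed
  show ?thesis unfolding cyclic_root_def using sums prod1 by blast
qed


lemma xpt_small: assumes "p < m - 1" shows "xpt m t p = (\<Prod>l\<le>p. t l)"
proof -
  have "p div m = 0" "p mod m = p" using assms by auto
  thus ?thesis using assms by (simp add: xpt_def unit_root_def)
qed

lemma prefix_inj:
  fixes t t' :: "nat \<Rightarrow> complex"
  assumes "\<forall>j<M. (\<Prod>l\<le>j. t l) = (\<Prod>l\<le>j. t' l)" "\<forall>j<M. t j \<noteq> 0"
  shows "j < M \<longrightarrow> t j = t' j"
proof (induction j)
  case 0
  have "{..0::nat} = {0}" by auto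
  then show ?case using assms(1) by auto
next
  case (Suc j)
  show ?case
  proof
    assume j: "Suc j < M"
    have "(\<Prod>l\<le>j. t l) * t (Suc j) = (\<Prod>l\<le>j. t' l) * t' (Suc j)"
    proof -
      have "(\<Prod>l\<le>Suc j. t l) = (\<Prod>l\<le>Suc j. t' l)" using assms(1) j by blast
      thus ?thesis by (simp only: prod.atMost_Suc)
    qed
    moreover have "(\<Prod>l\<le>j. t l) = (\<Prod>l\<le>j. t' l)" using assms(1) j by simp
    moreover have "(\<Prod>l\<le>j. t l) \<noteq> 0" using assms(2) j by simp
    ultimately show "t (Suc j) = t' (Suc j)" by simp
  qed
qed

lemma inj_part:
  assumes m2: "m \<ge> 2" and nn: "n = m ^ 2"
  shows "inj_on (\<lambda>t. \<lambda>p\<in>{..<n}. xpt m t p) (param_dom m)"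
proof (rule inj_onI)
  fix t t' assume t: "t \<in> param_dom m" and t': "t' \<in> param_dom m"
    and eq: "(\<lambda>p\<in>{..<n}. xpt m t p) = (\<lambda>p\<in>{..<n}. xpt m t' p)"
  have mn: "m - 1 < n"
  proof -
    have a: "m - 1 < m" using m2 by simp
    have b: "m \<le> m * m" by simp
    show ?thesis unfolding nn power2_eq_square using a b by linarith
  qed
  have "\<forall>j<m-1. (\<Prod>l\<le>j. t l) = (\<Prod>l\<le>j. t' l)"
  proof (intro allI impI)
    fix j assume j: "j < m - 1"
    have "xpt m t j = xpt m t' j" using fun_cong[OF eq, of j] j mn by simp
    thus "(\<Prod>l\<le>j. t l) = (\<Prod>l\<le>j. t' l)" using j by (simp add: xpt_small)
  qed
  hence lt: "j < m - 1 \<longrightarrow> t j = t' j" for j using prefix_inj t by (auto simp: param_dom_def)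
  show "t = t'"
  proof
    fix j show "t j = t' j"
    proof (cases "j < m - 1")
      case True thus ?thesis using lt by blast
    next
      case False thus ?thesis using t t' by (simp add: param_dom_def)
    qed
  qed
qed


lemma hol_upd: "(\<lambda>s. (t(j:=s)) l) holomorphic_on A"
proof (cases "l = j")
  case True thus ?thesis by (simp add: holomorphic_on_id)
next
  case False thus ?thesis by (simp add: holomorphic_on_const)
qed

lemma xpt_diff:
  assumes t: "t \<in> param_dom m" and j: "j < m - 1"
  shows "(\<lambda>s. xpt m (t(j:=s)) p) field_differentiable at (t j)"
proof -
  define A :: "complex set" where "A = - {0}"
  have oA: "open A" unfolding A_def by (simp add: open_Compl)
  have tjA: "t j \<in> A" using t j unfolding A_def param_dom_def by auto
  have nz: "\<forall>x\<in>A. (t(j:=x)) l \<noteq> 0" if "l < m - 1" for l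
    using t that unfolding A_def param_dom_def by auto
  have "(\<lambda>s. xpt m (t(j:=s)) p) holomorphic_on A"
  proof (cases "p mod m < m - 1")
    case True
    thus ?thesis unfolding xpt_def Let_def
      by (simp only: if_True) (intro holomorphic_intros hol_upd)
  next
    case False
    thus ?thesis unfolding xpt_def Let_def
      by (simp only: if_False) (intro holomorphic_intros hol_upd disjI2 nz, simp)
  qed
  thus ?thesis using oA tjA holomorphic_on_imp_differentiable_at by blast
qed

lemma deriv_small:
  assumes t: "t \<in> param_dom m" and p: "p < m - 1"
  shows "((\<lambda>s. xpt m (t(j:=s)) p) has_field_derivative
           (if j \<le> p then (\<Prod>l\<in>{..p}-{j}. t l) else 0)) (at (t j))"
proof (cases "j \<le> p")
  case True
  have "xpt m (t(j:=s)) p = s * (\<Prod>l\<in>{..p}-{j}. t l)" for s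
  proof -
    have "xpt m (t(j:=s)) p = (\<Prod>l\<le>p. (t(j:=s)) l)" using p by (rule xpt_small)
    also have "\<dots> = (t(j:=s)) j * (\<Prod>l\<in>{..p}-{j}. (t(j:=s)) l)"
      using True by (intro prod.remove) auto
    also have "(\<Prod>l\<in>{..p}-{j}. (t(j:=s)) l) = (\<Prod>l\<in>{..p}-{j}. t l)"
      by (intro prod.cong) auto
    finally show ?thesis by (simp only: fun_upd_same)
  qed
  hence e: "(\<lambda>s. xpt m (t(j:=s)) p) = (\<lambda>s. s * (\<Prod>l\<in>{..p}-{j}. t l))" by (rule ext)
  show ?thesis unfolding e using True by (auto intro!: derivative_eq_intros)
next
  case False
  have "xpt m (t(j:=s)) p = (\<Prod>l\<le>p. t l)" for s
  proof -
    have "xpt m (t(j:=s)) p = (\<Prod>l\<le>p. (t(j:=s)) l)" using p by (rule xpt_small)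
    also have "\<dots> = (\<Prod>l\<le>p. t l)" using False by (intro prod.cong) auto
    finally show ?thesis .
  qed
  hence e: "(\<lambda>s. xpt m (t(j:=s)) p) = (\<lambda>s. (\<Prod>l\<le>p. t l))" by (rule ext)
  show ?thesis unfolding e using False by (auto intro!: derivative_eq_intros)
qed


lemma deriv_part:
  assumes m2: "m \<ge> 2" and nn: "n = m ^ 2" and t: "t \<in> param_dom m"
  shows "\<exists>D :: nat \<Rightarrow> nat \<Rightarrow> complex.
          (\<forall>p<n. \<forall>j<m-1. ((\<lambda>s. xpt m (t(j := s)) p) has_field_derivative D p j) (at (t j)))
          \<and> (\<forall>c :: nat \<Rightarrow> complex. (\<forall>p<n. (\<Sum>j<m-1. c j * D p j) = 0) \<longrightarrow> (\<forall>j<m-1. c j = 0))"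
proof (intro exI conjI allI impI)
  define D where "D p j = deriv (\<lambda>s. xpt m (t(j:=s)) p) (t j)" for p j
  have tnz: "\<forall>j<m-1. t j \<noteq> 0" using t by (simp add: param_dom_def)
  show "((\<lambda>s. xpt m (t(j := s)) p) has_field_derivative D p j) (at (t j))"
    if "p < n" "j < m - 1" for p j
    unfolding D_def using xpt_diff[OF t that(2)] DERIV_deriv_iff_field_differentiable by blast
  have mn: "m - 1 < n"
  proof -
    have a: "m - 1 < m" using m2 by simp
    have b: "m \<le> m * m" by simp
    show ?thesis unfolding nn power2_eq_square using a b by linarith
  qed
  fix c :: "nat \<Rightarrow> complex"
  assume hc: "\<forall>p<n. (\<Sum>j<m-1. c j * D p j) = 0"
  have S0: "(\<Sum>j\<le>p. c j / t j) = 0" if p: "p < m - 1" for p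
  proof -
    define P where "P = (\<Prod>l\<le>p. t l)"
    have Pnz: "P \<noteq> 0" unfolding P_def using tnz p by simp
    have Dp: "c j * D p j = (if j \<le> p then P * (c j / t j) else 0)" if "j < m - 1" for j
    proof (cases "j \<le> p")
      case True
      have "D p j = (\<Prod>l\<in>{..p}-{j}. t l)"
        unfolding D_def using DERIV_imp_deriv[OF deriv_small[OF t p, of j]] True by simp
      moreover have "P = t j * (\<Prod>l\<in>{..p}-{j}. t l)" unfolding P_def
        using True by (intro prod.remove) auto
      moreover have "t j \<noteq> 0" using tnz that by simp
      ultimately show ?thesis using True by (simp add: field_simps)
    next
      case False
      have "D p j = 0"
        unfolding D_def using DERIV_imp_deriv[OF deriv_small[OF t p, of j]] False by simp
      thus ?thesis using False by simp
    qed
    have "0 = (\<Sum>j<m-1. c j * D p j)" using hc p mn by simp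
    also have "\<dots> = (\<Sum>j<m-1. if j \<le> p then P * (c j / t j) else 0)"
      using Dp by (intro sum.cong) auto
    also have "\<dots> = (\<Sum>j\<le>p. P * (c j / t j))"
      using p by (intro sum.mono_neutral_cong_right) auto
    also have "\<dots> = P * (\<Sum>j\<le>p. c j / t j)" by (simp add: sum_distrib_left)
    finally show ?thesis using Pnz by simp
  qed
  fix j assume j: "j < m - 1"
  have "c j / t j = 0"
  proof (cases j)
    case 0
    have "{..0::nat} = {0}" by auto
    thus ?thesis using S0[OF j] 0 by simp
  next
    case (Suc q)
    have "(\<Sum>i\<le>Suc q. c i / t i) = (\<Sum>i\<le>q. c i / t i) + c (Suc q) / t (Suc q)"
      by (simp only: sum.atMost_Suc)
    thus ?thesis using S0[OF j] S0[of q] j Suc by simp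
  qed
  thus "c j = 0" using tnz j by simp
qed


theorem proposition2:
  fixes m n :: nat
  assumes "m \<ge> 2" and "n = m ^ 2"
  shows "(\<forall>t\<in>param_dom m. cyclic_root n (xpt m t))
    \<and> inj_on (\<lambda>t. \<lambda>p\<in>{..<n}. xpt m t p) (param_dom m)
    \<and> (\<forall>t\<in>param_dom m. \<exists>D :: nat \<Rightarrow> nat \<Rightarrow> complex.
          (\<forall>p<n. \<forall>j<m-1. ((\<lambda>s. xpt m (t(j := s)) p) has_field_derivative D p j) (at (t j)))
          \<and> (\<forall>c :: nat \<Rightarrow> complex. (\<forall>p<n. (\<Sum>j<m-1. c j * D p j) = 0) \<longrightarrow> (\<forall>j<m-1. c j = 0)))"
  using cyclic_part[OF assms] inj_part[OF assms] deriv_part[OF assms] by blast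

end
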